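(* Let $u,v\in S_n$. Then $C(v)\subseteq C(u)$ (i.e. $u\le v$ in the shard intersection order) if and only if both of the following hold: (Refinement) the set partition of $\{1,\dots,n\}$ into blocks of $u$ refines the set partition into blocks of $v$; (Consistency) whenever $i<k<j$, $i$ and $j$ lie in the same block of $u$, and $k$ does not lie in that block of $u$, then either $k$ lies in the same block of $v$ as $i$ and $j$, or $k$ lies on the same side (left or right) of $i$ in $v$ as it does in $u$.
   Context: For $w=w(1)\cdots w(n)\in S_n$ (one-line notation), the blocks of $w$ are the sets of letters of its maximal decreasing runs (maximal consecutive factors $w(a)>w(a+1)>\cdots>w(b)$). Let $V=\{x\in\mathbb R^n:\sum_i x_i=0\}$. The cone $C(w)\subseteq V$ is the set of $x\in V$ such that: (i) $x_i=x_j$ whenever $i,j$ lie in the same block of $w$; (ii) whenever $i<k<j$ with $i,j$ in the same block and $k$ not in that block, $x_k\le x_i$ if $k$ appears to the left of $i$ in $w$, and $x_i\le x_k$ if $k$ appears to the right of $i$ in $w$. The shard intersection order on $S_n$: $u\le v$ iff $C(v)\subseteq C(u)$. *)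

theory Defs
  imports "HOL-Combinatorics.Permutations" Complex_Main
begin

text \<open>A permutation w of S_n is represented by a function w :: nat => nat with
  w permutes {1..n}; w p is the letter at position p (one-line notation
  w(1) ... w(n)).\<close>

definition pos :: "(nat \<Rightarrow> nat) \<Rightarrow> nat \<Rightarrow> nat" where
  "pos w i = inv w i"

definition max_dec_run :: "nat \<Rightarrow> (nat \<Rightarrow> nat) \<Rightarrow> nat \<Rightarrow> nat \<Rightarrow> bool" where
  "max_dec_run n w a b \<longleftrightarrow>
     1 \<le> a \<and> a \<le> b \<and> b \<le> n \<and>
     (\<forall>p. a \<le> p \<and> p < b \<longrightarrow> w p > w (p + 1)) \<and>
     (a = 1 \<or> w (a - 1) < w a) \<and>
     (b = n \<or> w b < w (b + 1))"

definition blocks :: "nat \<Rightarrow> (nat \<Rightarrow> nat) \<Rightarrow> nat set set" where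
  "blocks n w = {w ` {a..b} | a b. max_dec_run n w a b}"

definition left_of :: "(nat \<Rightarrow> nat) \<Rightarrow> nat \<Rightarrow> nat \<Rightarrow> bool" where
  "left_of w k i \<longleftrightarrow> pos w k < pos w i"

text \<open>V = {x in R^n. sum x_i = 0}, with vectors in R^n represented as
  functions nat => real vanishing outside {1..n}.\<close>
definition V :: "nat \<Rightarrow> (nat \<Rightarrow> real) set" where
  "V n = {x. (\<forall>i. i \<notin> {1..n} \<longrightarrow> x i = 0) \<and> (\<Sum>i\<in>{1..n}. x i) = 0}"

definition cone :: "nat \<Rightarrow> (nat \<Rightarrow> nat) \<Rightarrow> (nat \<Rightarrow> real) set" where
  "cone n w = {x \<in> V n.
     (\<forall>B\<in>blocks n w. \<forall>i\<in>B. \<forall>j\<in>B. x i = x j) \<and>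
     (\<forall>B\<in>blocks n w. \<forall>i\<in>B. \<forall>j\<in>B. \<forall>k. i < k \<and> k < j \<and> k \<notin> B \<longrightarrow>
        (left_of w k i \<longrightarrow> x k \<le> x i) \<and>
        (\<not> left_of w k i \<longrightarrow> x i \<le> x k))}"

end

theory Submission
  imports Defs
begin

definition cond :: "nat \<Rightarrow> (nat \<Rightarrow> nat) \<Rightarrow> (nat \<Rightarrow> real) \<Rightarrow> bool" where
  "cond n w x \<longleftrightarrow>
     (\<forall>B\<in>blocks n w. \<forall>i\<in>B. \<forall>j\<in>B. x i = x j) \<and>
     (\<forall>B\<in>blocks n w. \<forall>i\<in>B. \<forall>j\<in>B. \<forall>k. i < k \<and> k < j \<and> k \<notin> B \<longrightarrow>
        (left_of w k i \<longrightarrow> x k \<le> x i) \<and>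
        (\<not> left_of w k i \<longrightarrow> x i \<le> x k))"

lemma cone_cond: "cone n w = {x \<in> V n. cond n w x}"
  unfolding cone_def cond_def by simp

lemma blk:
  assumes "B \<in> blocks n v"
  obtains a b where "max_dec_run n v a b" "B = v ` {a..b}"
  using assms unfolding blocks_def by blast

lemma v_pos: "v permutes S \<Longrightarrow> v (pos v k) = k"
  unfolding pos_def by (rule permutes_inverses(1))

lemma pos_v: "v permutes S \<Longrightarrow> pos v (v p) = p"
  unfolding pos_def by (rule permutes_inverses(2))

lemma in_blk_pos:
  assumes "v permutes {1..n}"
  shows "k \<in> v ` {a..b} \<longleftrightarrow> pos v k \<in> {a..b}"
proof
  assume "k \<in> v ` {a..b}"
  then obtain p where "p \<in> {a..b}" "k = v p" by blast
  then show "pos v k \<in> {a..b}" using pos_v[OF assms, of p] by simp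
next
  assume h: "pos v k \<in> {a..b}"
  have "k = v (pos v k)" using v_pos[OF assms] by simp
  then show "k \<in> v ` {a..b}" using h by (rule image_eqI)
qed

lemma blocks_sub:
  assumes "v permutes {1..n}" "B \<in> blocks n v"
  shows "B \<subseteq> {1..n}"
proof -
  obtain a b where ab: "max_dec_run n v a b" "B = v ` {a..b}" using blk[OF assms(2)] by blast
  have ab1: "1 \<le> a" "b \<le> n" using ab(1) unfolding max_dec_run_def by simp_all
  show ?thesis
  proof
    fix x assume "x \<in> B"
    then obtain p where p: "p \<in> {a..b}" "x = v p" using ab(2) by blast
    then have "p \<in> {1..n}" using ab1 by simp
    then show "x \<in> {1..n}" using p(2) permutes_in_image[OF assms(1), of p] by simp
  qed
qed

lemma pos_in:
  assumes "v permutes {1..n}" "k \<in> {1..n}"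
  shows "pos v k \<in> {1..n}"
  unfolding pos_def using permutes_in_image[OF permutes_inv[OF assms(1)], of k] assms(2) by simp

lemma exists_block:
  assumes "v permutes {1..n}" "i \<in> {1..n}"
  shows "\<exists>a b. max_dec_run n v a b \<and> i \<in> v ` {a..b}"
proof -
  define p where "p = pos v i"
  have p: "p \<in> {1..n}" using pos_in[OF assms] p_def by simp
  have inj: "\<And>x y. v x = v y \<Longrightarrow> x = y" using assms(1) by (metis pos_v)
  define SA where "SA = {q \<in> {1..p}. q = 1 \<or> v (q - 1) < v q}"
  define SB where "SB = {q \<in> {p..n}. q = n \<or> v q < v (q + 1)}"
  define a where "a = Max SA"
  define b where "b = Min SB"
  have fa: "finite SA" "SA \<noteq> {}" unfolding SA_def using p by auto
  have fb: "finite SB" "SB \<noteq> {}" unfolding SB_def using p by auto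
  have aS: "a \<in> SA" unfolding a_def using fa by simp
  have bS: "b \<in> SB" unfolding b_def using fb by simp
  have amax: "\<And>q. q \<in> SA \<Longrightarrow> q \<le> a" unfolding a_def using fa by simp
  have bmin: "\<And>q. q \<in> SB \<Longrightarrow> b \<le> q" unfolding b_def using fb by simp
  have "max_dec_run n v a b"
    unfolding max_dec_run_def
  proof (intro conjI allI impI)
    show "1 \<le> a" "a \<le> b" "b \<le> n" using aS bS unfolding SA_def SB_def by auto
    show "a = 1 \<or> v (a - 1) < v a" using aS unfolding SA_def by auto
    show "b = n \<or> v b < v (b + 1)" using bS unfolding SB_def by auto
  next
    fix q assume q: "a \<le> q \<and> q < b"
    have ne: "v q \<noteq> v (q + 1)" using inj by fastforce
    show "v (q + 1) < v q"
    proof (rule ccontr)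
      assume "\<not> v (q + 1) < v q"
      then have lt: "v q < v (q + 1)" using ne by simp
      show False
      proof (cases "q < p")
        case True
        then have "q + 1 \<in> SA" unfolding SA_def using lt by auto
        then show False using amax q by fastforce
      next
        case False
        then have "q \<in> SB" unfolding SB_def using lt q bS unfolding SB_def by auto
        then show False using bmin q by fastforce
      qed
    qed
  qed
  moreover have "i \<in> v ` {a..b}"
  proof -
    have "p \<in> {a..b}" using aS bS unfolding SA_def SB_def by auto
    moreover have "i = v p" using v_pos[OF assms(1), of i] p_def by simp
    ultimately show ?thesis by blast
  qed
  ultimately show ?thesis by blast
qed

lemma exists_block':
  assumes "v permutes {1..n}" "i \<in> {1..n}"
  shows "\<exists>B\<in>blocks n v. i \<in> B"
  using exists_block[OF assms] unfolding blocks_def by blast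

definition thr :: "(nat \<Rightarrow> nat) \<Rightarrow> nat \<Rightarrow> nat \<Rightarrow> real" where
  "thr v p k = (if p \<le> pos v k then 1 else 0)"

lemma thr_cond:
  assumes "v permutes {1..n}" "2 \<le> p" "v (p - 1) < v p"
  shows "cond n v (thr v p)"
  unfolding cond_def
proof (intro conjI ballI allI impI)
  fix B i j assume B: "B \<in> blocks n v" and i: "i \<in> B" and j: "j \<in> B"
  obtain a b where ab: "max_dec_run n v a b" "B = v ` {a..b}" using blk[OF B] by blast
  have pi: "pos v i \<in> {a..b}" and pj: "pos v j \<in> {a..b}"
    using i j ab(2) in_blk_pos[OF assms(1)] by auto
  have no: "\<not> (a \<le> p - 1 \<and> p \<le> b)"
  proof
    assume h: "a \<le> p - 1 \<and> p \<le> b"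
    then have "v (p - 1 + 1) < v (p - 1)" using ab(1) unfolding max_dec_run_def by auto
    then show False using assms(2,3) by simp
  qed
  show "thr v p i = thr v p j" unfolding thr_def using pi pj no by auto
next
  fix B i j k assume "left_of v k i"
  then show "thr v p k \<le> thr v p i" unfolding thr_def left_of_def by auto
next
  fix B i j k assume "\<not> left_of v k i"
  then show "thr v p i \<le> thr v p k" unfolding thr_def left_of_def by auto
qed

definition nrm :: "nat \<Rightarrow> (nat \<Rightarrow> real) \<Rightarrow> nat \<Rightarrow> real" where
  "nrm n f a = (if a \<in> {1..n} then f a - (\<Sum>i\<in>{1..n}. f i) / n else 0)"

lemma runL:
  assumes "max_dec_run n v a b" "q < a" "1 \<le> q"
  shows "2 \<le> a \<and> v (a - 1) < v a"
  using assms unfolding max_dec_run_def by auto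

lemma runR:
  assumes "max_dec_run n v a b" "b < q" "q \<le> n"
  shows "2 \<le> b + 1 \<and> v (b + 1 - 1) < v (b + 1)"
  using assms unfolding max_dec_run_def by auto

lemma cond_eq: "cond n u x \<Longrightarrow> B \<in> blocks n u \<Longrightarrow> i \<in> B \<Longrightarrow> j \<in> B \<Longrightarrow> x i = x j"
  unfolding cond_def by blast

lemma cond_le1: "cond n u x \<Longrightarrow> B \<in> blocks n u \<Longrightarrow> i \<in> B \<Longrightarrow> j \<in> B \<Longrightarrow>
  i < k \<Longrightarrow> k < j \<Longrightarrow> k \<notin> B \<Longrightarrow> left_of u k i \<Longrightarrow> x k \<le> x i"
  unfolding cond_def by blast

lemma cond_le2: "cond n u x \<Longrightarrow> B \<in> blocks n u \<Longrightarrow> i \<in> B \<Longrightarrow> j \<in> B \<Longrightarrow>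
  i < k \<Longrightarrow> k < j \<Longrightarrow> k \<notin> B \<Longrightarrow> \<not> left_of u k i \<Longrightarrow> x i \<le> x k"
  unfolding cond_def by blast

lemma nrm_val: "a \<in> {1..n} \<Longrightarrow> nrm n f a = f a - (\<Sum>i\<in>{1..n}. f i) / n"
  unfolding nrm_def by simp

lemma nrm_V: "nrm n f \<in> V n"
proof -
  have "(\<Sum>i\<in>{1..n}. nrm n f i) = (\<Sum>i\<in>{1..n}. f i - (\<Sum>i\<in>{1..n}. f i) / n)"
    by (rule sum.cong) (simp_all add: nrm_val)
  also have "\<dots> = (\<Sum>i\<in>{1..n}. f i) - n * ((\<Sum>i\<in>{1..n}. f i) / n)"
    by (simp add: sum_subtractf)
  also have "\<dots> = 0"
    by (cases "n = 0") simp_all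
  finally have s: "(\<Sum>i\<in>{1..n}. nrm n f i) = 0" .
  have "\<forall>i. i \<notin> {1..n} \<longrightarrow> nrm n f i = 0" unfolding nrm_def by simp
  then show ?thesis using s unfolding V_def by blast
qed

lemma nrm_cone:
  assumes "w permutes {1..n}" "cond n w f"
  shows "nrm n f \<in> cone n w"
proof -
  have sub: "\<And>B. B \<in> blocks n w \<Longrightarrow> B \<subseteq> {1..n}" using blocks_sub[OF assms(1)] by blast
  have "cond n w (nrm n f)"
    unfolding cond_def
  proof (intro conjI ballI allI impI)
    fix B i j assume h: "B \<in> blocks n w" "i \<in> B" "j \<in> B"
    then have "i \<in> {1..n}" "j \<in> {1..n}" using sub by blast+
    then show "nrm n f i = nrm n f j" using cond_eq[OF assms(2) h] by (simp add: nrm_val)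
  next
    fix B i j k assume h: "B \<in> blocks n w" "i \<in> B" "j \<in> B" "i < k \<and> k < j \<and> k \<notin> B"
      "left_of w k i"
    then have "i \<in> {1..n}" "j \<in> {1..n}" using sub by blast+
    moreover then have "k \<in> {1..n}" using h(4) by auto
    ultimately show "nrm n f k \<le> nrm n f i"
      using cond_le1[OF assms(2) h(1,2,3)] h(4,5) by (simp add: nrm_val)
  next
    fix B i j k assume h: "B \<in> blocks n w" "i \<in> B" "j \<in> B" "i < k \<and> k < j \<and> k \<notin> B"
      "\<not> left_of w k i"
    then have "i \<in> {1..n}" "j \<in> {1..n}" using sub by blast+
    moreover then have "k \<in> {1..n}" using h(4) by auto
    ultimately show "nrm n f i \<le> nrm n f k"
      using cond_le2[OF assms(2) h(1,2,3)] h(4,5) by (simp add: nrm_val)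
  qed
  then show ?thesis using nrm_V cone_cond by blast
qed

theorem mainTheorem6:
  fixes n :: nat and u v :: "nat \<Rightarrow> nat"
  assumes "u permutes {1..n}" and "v permutes {1..n}"
  shows "cone n v \<subseteq> cone n u \<longleftrightarrow>
    ((\<forall>B\<in>blocks n u. \<exists>B'\<in>blocks n v. B \<subseteq> B') \<and>
     (\<forall>B\<in>blocks n u. \<forall>i\<in>B. \<forall>j\<in>B. \<forall>k. i < k \<and> k < j \<and> k \<notin> B \<longrightarrow>
        (\<exists>B'\<in>blocks n v. i \<in> B' \<and> j \<in> B' \<and> k \<in> B') \<or>
        (left_of v k i \<longleftrightarrow> left_of u k i)))"
  (is "?L \<longleftrightarrow> ?R1 \<and> ?R2")
proof
  assume sub: ?L
  have cu: "cond n u (nrm n (thr v p))" if "2 \<le> p" "v (p - 1) < v p" for p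
    using nrm_cone[OF assms(2) thr_cond[OF assms(2) that]] sub cone_cond by blast
  have thr_sep: "\<exists>p. 2 \<le> p \<and> v (p - 1) < v p \<and>
      (pos v y < pos v x \<longrightarrow> thr v p y = 0 \<and> thr v p x = 1) \<and>
      (pos v x < pos v y \<longrightarrow> thr v p x = 0 \<and> thr v p y = 1) \<and>
      (pos v x < pos v y \<or> pos v y < pos v x)"
    if ab: "max_dec_run n v a b" and xy: "x \<in> v ` {a..b}" "y \<notin> v ` {a..b}" "y \<in> {1..n}" for a b x y
  proof -
    have px: "pos v x \<in> {a..b}" using xy(1) in_blk_pos[OF assms(2)] by blast
    have py: "pos v y \<notin> {a..b}" using xy(2) in_blk_pos[OF assms(2)] by blast
    have py1: "pos v y \<in> {1..n}" using pos_in[OF assms(2) xy(3)] .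
    show ?thesis
    proof (cases "pos v y < a")
      case True
      have r: "2 \<le> a \<and> v (a - 1) < v a" using runL[OF ab True] py1 by simp
      show ?thesis
        by (rule exI[of _ a]) (use r px True in \<open>auto simp: thr_def\<close>)
    next
      case False
      then have bl: "b < pos v y" using py by auto
      have r: "2 \<le> b + 1 \<and> v (b + 1 - 1) < v (b + 1)" using runR[OF ab bl] py1 by simp
      show ?thesis
        by (rule exI[of _ "b + 1"]) (use r px bl in \<open>auto simp: thr_def\<close>)
    qed
  qed
  have R1: ?R1
  proof
    fix B assume B: "B \<in> blocks n u"
    obtain a b where ab: "max_dec_run n u a b" "B = u ` {a..b}" using blk[OF B] by blast
    have ia: "u a \<in> B" using ab unfolding max_dec_run_def by auto
    have i1: "u a \<in> {1..n}" using blocks_sub[OF assms(1) B] ia by blast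
    obtain a' b' where ab': "max_dec_run n v a' b'" "u a \<in> v ` {a'..b'}"
      using exists_block[OF assms(2) i1] by blast
    have inb: "v ` {a'..b'} \<in> blocks n v" unfolding blocks_def using ab'(1) by blast
    have "B \<subseteq> v ` {a'..b'}"
    proof
      fix j assume j: "j \<in> B"
      have j1: "j \<in> {1..n}" using blocks_sub[OF assms(1) B] j by blast
      show "j \<in> v ` {a'..b'}"
      proof (rule ccontr)
        assume nj: "j \<notin> v ` {a'..b'}"
        obtain p where p: "2 \<le> p" "v (p - 1) < v p"
          "pos v j < pos v (u a) \<longrightarrow> thr v p j = 0 \<and> thr v p (u a) = 1"
          "pos v (u a) < pos v j \<longrightarrow> thr v p (u a) = 0 \<and> thr v p j = 1"
          "pos v (u a) < pos v j \<or> pos v j < pos v (u a)"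
          using thr_sep[OF ab'(1) ab'(2) nj j1] by blast
        have "nrm n (thr v p) (u a) = nrm n (thr v p) j"
          using cond_eq[OF cu[OF p(1,2)] B ia j] .
        then have "thr v p (u a) = thr v p j" using i1 j1 by (simp add: nrm_val)
        then show False using p(3,4,5) by auto
      qed
    qed
    then show "\<exists>B'\<in>blocks n v. B \<subseteq> B'" using inb by blast
  qed
  have R2: ?R2
  proof (intro ballI allI impI)
    fix B i j k assume B: "B \<in> blocks n u" and ij: "i \<in> B" "j \<in> B" and k: "i < k \<and> k < j \<and> k \<notin> B"
    obtain B' where B': "B' \<in> blocks n v" "B \<subseteq> B'" using R1 B by blast
    obtain a' b' where ab': "max_dec_run n v a' b'" "B' = v ` {a'..b'}" using blk[OF B'(1)] by blast
    have i1: "i \<in> {1..n}" and j1: "j \<in> {1..n}" using blocks_sub[OF assms(1) B] ij by blast+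
    have k1: "k \<in> {1..n}" using i1 j1 k by auto
    show "(\<exists>B'\<in>blocks n v. i \<in> B' \<and> j \<in> B' \<and> k \<in> B') \<or> (left_of v k i \<longleftrightarrow> left_of u k i)"
    proof (cases "k \<in> B'")
      case True
      then show ?thesis using B' ij by blast
    next
      case False
      have iB': "i \<in> v ` {a'..b'}" using ij B' ab' by blast
      obtain p where p: "2 \<le> p" "v (p - 1) < v p"
          "pos v k < pos v i \<longrightarrow> thr v p k = 0 \<and> thr v p i = 1"
          "pos v i < pos v k \<longrightarrow> thr v p i = 0 \<and> thr v p k = 1"
          "pos v i < pos v k \<or> pos v k < pos v i"
        using thr_sep[OF ab'(1) iB', of k] False ab'(2) k1 by blast
      have c: "cond n u (nrm n (thr v p))" using cu[OF p(1,2)] .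
      have "left_of v k i \<longleftrightarrow> left_of u k i"
      proof (cases "left_of u k i")
        case True
        have "nrm n (thr v p) k \<le> nrm n (thr v p) i"
          using cond_le1[OF c B ij] k True by blast
        then have "thr v p k \<le> thr v p i" using i1 k1 by (simp add: nrm_val)
        then show ?thesis using True p(3,4,5) unfolding left_of_def by auto
      next
        case False
        have "nrm n (thr v p) i \<le> nrm n (thr v p) k"
          using cond_le2[OF c B ij] k False by blast
        then have "thr v p i \<le> thr v p k" using i1 k1 by (simp add: nrm_val)
        then show ?thesis using False p(3,4,5) unfolding left_of_def by auto
      qed
      then show ?thesis by blast
    qed
  qed
  show "?R1 \<and> ?R2" using R1 R2 by blast
next
  assume R: "?R1 \<and> ?R2"
  show ?L
  proof
    fix x assume x: "x \<in> cone n v"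
    have xV: "x \<in> V n" and cv: "cond n v x" using x cone_cond by auto
    have "cond n u x"
      unfolding cond_def
    proof (intro conjI ballI allI impI)
      fix B i j assume B: "B \<in> blocks n u" "i \<in> B" "j \<in> B"
      then obtain B' where "B' \<in> blocks n v" "B \<subseteq> B'" using R by blast
      then show "x i = x j" using cond_eq[OF cv] B by blast
    next
      fix B i j k assume B: "B \<in> blocks n u" "i \<in> B" "j \<in> B" "i < k \<and> k < j \<and> k \<notin> B"
      obtain B' where B': "B' \<in> blocks n v" "B \<subseteq> B'" using R B by blast
      have "x k \<le> x i \<and> x i \<le> x k \<or> (left_of v k i \<longleftrightarrow> left_of u k i) \<and> k \<notin> B'"
      proof (cases "k \<in> B'")
        case True
        moreover have "i \<in> B'" using B B' by blast
        ultimately have "x k = x i" using cond_eq[OF cv B'(1), of k i] by blast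
        then show ?thesis by simp
      next
        case False
        have "(\<exists>B''\<in>blocks n v. i \<in> B'' \<and> j \<in> B'' \<and> k \<in> B'') \<or>
            (left_of v k i \<longleftrightarrow> left_of u k i)" using R B by blast
        then show ?thesis
        proof
          assume "\<exists>B''\<in>blocks n v. i \<in> B'' \<and> j \<in> B'' \<and> k \<in> B''"
          then obtain B'' where "B'' \<in> blocks n v" "i \<in> B''" "k \<in> B''" by blast
          then have "x k = x i" using cond_eq[OF cv] by blast
          then show ?thesis by simp
        next
          assume "left_of v k i \<longleftrightarrow> left_of u k i"
          then show ?thesis using False by simp
        qed
      qed
      moreover have "i \<in> B'" "j \<in> B'" using B B' by blast+
      ultimately have "x k \<le> x i \<and> x i \<le> x k \<or>
          (left_of u k i \<longrightarrow> x k \<le> x i) \<and> (\<not> left_of u k i \<longrightarrow> x i \<le> x k)"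
        using cond_le1[OF cv B'(1), of i j k] cond_le2[OF cv B'(1), of i j k] B(4) by auto
      then show "left_of u k i \<Longrightarrow> x k \<le> x i" "\<not> left_of u k i \<Longrightarrow> x i \<le> x k" by auto
    qed
    then show "x \<in> cone n u" using xV cone_cond by blast
  qed
qed

end
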